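(* For real $p\neq 0$, the inequality $\left( \frac{\tanh x}{x}\right) ^{p}<\frac{2}{3}\left( \frac{x}{\sinh x}\right) ^{3p}+\frac{1}{3}$ holds for all $x\in(0,\infty)$ if and only if $p<0$ or $p\geq 12/5$. *)

theory Defs
  imports Complex_Main
begin

end

theory Submission
  imports Defs "HOL-Analysis.Convex" "HOL-Real_Asymp.Real_Asymp"
begin


definition osf :: "(nat \<times> real \<times> real) list \<Rightarrow> real \<Rightarrow> real" where
 "osf L x = sum_list (map (\<lambda>(j,k,a). a * x^j * (if even j then sinh (k*x) else cosh (k*x))) L)"

definition osc :: "(nat \<times> real \<times> real) list \<Rightarrow> nat \<Rightarrow> real" where
 "osc L n = (if odd n then sum_list (map (\<lambda>(j,k,a). if j \<le> n then a * k^(n-j) / fact (n-j) else 0) L) else 0)"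

lemma term_sums:
  fixes x k a :: real
  shows "(\<lambda>n. (if odd n then (if j \<le> n then a * k^(n-j) / fact (n-j) else 0) else 0) * x^n)
     sums (a * x^j * (if even j then sinh (k*x) else cosh (k*x)))"
proof -
  let ?f = "\<lambda>n. (if odd n then (if j \<le> n then a * k^(n-j) / fact (n-j) else 0) else 0) * x^n"
  have z: "\<And>i. i < j \<Longrightarrow> ?f i = 0" by auto
  show ?thesis
  proof (cases "even j")
    case True
    have "(\<lambda>i. a * x^j * (if even i then 0 else (k*x) ^ i /\<^sub>R fact i)) sums (a * x^j * sinh (k*x))"
      by (intro sums_mult sinh_converges)
    moreover have "(\<lambda>i. a * x^j * (if even i then 0 else (k*x) ^ i /\<^sub>R fact i)) = (\<lambda>i. ?f (i+j))"
      using True by (auto simp: fun_eq_iff power_mult_distrib power_add divide_simps)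
    ultimately have "(\<lambda>i. ?f (i+j)) sums (a * x^j * sinh (k*x))" by simp
    then show ?thesis using True sums_zero_iff_shift[of j ?f, OF z] by simp
  next
    case False
    have "(\<lambda>i. a * x^j * (if even i then (k*x) ^ i /\<^sub>R fact i else 0)) sums (a * x^j * cosh (k*x))"
      by (intro sums_mult cosh_converges)
    moreover have "(\<lambda>i. a * x^j * (if even i then (k*x) ^ i /\<^sub>R fact i else 0)) = (\<lambda>i. ?f (i+j))"
      using False by (auto simp: fun_eq_iff power_mult_distrib power_add divide_simps)
    ultimately have "(\<lambda>i. ?f (i+j)) sums (a * x^j * cosh (k*x))" by simp
    then show ?thesis using False sums_zero_iff_shift[of j ?f, OF z] by simp
  qed
qed

lemma osf_sums: "(\<lambda>n. osc L n * x^n) sums osf L x"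
proof (induction L)
  case Nil
  have "osc [] = (\<lambda>n. 0)" by (auto simp: osc_def fun_eq_iff)
  then show ?case by (simp add: osf_def)
next
  case (Cons t L)
  obtain j k a where t: "t = (j,k,a)" by (cases t) auto
  have "(\<lambda>n. (if odd n then (if j \<le> n then a * k^(n-j) / fact (n-j) else 0) else 0) * x^n + osc L n * x^n)
     sums (a * x^j * (if even j then sinh (k*x) else cosh (k*x)) + osf L x)"
    by (intro sums_add term_sums Cons)
  moreover have "\<And>n. osc (t#L) n * x^n = (if odd n then (if j \<le> n then a * k^(n-j) / fact (n-j) else 0) else 0) * x^n + osc L n * x^n"
    by (simp add: t osc_def algebra_simps)
  moreover have "osf (t#L) x = a * x^j * (if even j then sinh (k*x) else cosh (k*x)) + osf L x"
    by (simp add: t osf_def)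
  ultimately show ?case by simp
qed

lemma osf_pos:
  assumes "x > 0" "\<And>n. osc L n \<ge> 0" "osc L m > 0"
  shows "osf L x > 0"
proof -
  have "osf L x = (\<Sum>n. osc L n * x^n)" using osf_sums sums_unique by metis
  also have "\<dots> > 0"
    using assms osf_sums[of L x] by (intro suminf_pos2[where i=m]) (auto simp: sums_iff)
  finally show ?thesis .
qed


lemma sinh3: "sinh (3*x) = 3 * sinh x + 4 * sinh x ^ 3" for x :: real
proof -
  have "sinh (3*x) = sinh (2*x + x)" by simp
  also have "\<dots> = 3 * sinh x + 4 * sinh x ^ 3"
    unfolding sinh_add sinh_double cosh_double using cosh_square_eq[of x]
    by algebra
  finally show ?thesis .
qed

lemma cosh3: "cosh (3*x) = 4 * cosh x ^ 3 - 3 * cosh x" for x :: real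
proof -
  have "cosh (3*x) = cosh (2*x + x)" by simp
  also have "\<dots> = 4 * cosh x ^ 3 - 3 * cosh x"
    unfolding cosh_add sinh_double cosh_double using cosh_square_eq[of x]
    by algebra
  finally show ?thesis .
qed

lemma sinh5: "sinh (5*x) = 5 * sinh x + 20 * sinh x ^ 3 + 16 * sinh x ^ 5" for x :: real
proof -
  have "sinh (5*x) = sinh (3*x + 2*x)" by simp
  also have "\<dots> = 5 * sinh x + 20 * sinh x ^ 3 + 16 * sinh x ^ 5"
    unfolding sinh_add sinh3 cosh3 sinh_double cosh_double using cosh_square_eq[of x]
    by algebra
  finally show ?thesis .
qed

lemma cosh5: "cosh (5*x) = 16 * cosh x ^ 5 - 20 * cosh x ^ 3 + 5 * cosh x" for x :: real
proof -
  have "cosh (5*x) = cosh (3*x + 2*x)" by simp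
  also have "\<dots> = 16 * cosh x ^ 5 - 20 * cosh x ^ 3 + 5 * cosh x"
    unfolding cosh_add sinh3 cosh3 sinh_double cosh_double using cosh_square_eq[of x]
    by algebra
  finally show ?thesis .
qed

definition E3 :: "real \<Rightarrow> real" where
  "E3 x = 12 * (x * cosh x - sinh x) * (4*x + 3*x*sinh x^2 - 4*cosh x*sinh x) * (cosh x * sinh x - x)
     + 5*x*sinh x^2 * (2*x^2*cosh x - x * sinh x - cosh x * sinh x^2)"

definition LE3 :: "(nat \<times> real \<times> real) list" where
  "LE3 = [(0,5,3),(0,3,-3),(0,1,-6),(1,5,-89/16),(1,3,-309/16),(1,1,199/8),(2,5,9/4),(2,3,59/2),(2,1,177/4),(3,3,-13/2),(3,1,-83/2)]"

lemma E3_osf: "E3 x = osf LE3 x"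
  unfolding E3_def LE3_def osf_def using cosh_square_eq[of x]
  by (simp add: sinh3 cosh3 sinh5 cosh5) algebra


definition QE3 :: "nat \<Rightarrow> real" where
 "QE3 m = 5^m * (375 - (2225/16)*(m+3) + (45/4)*(m+3)*(m+2))
        + 3^m * (-81 - (2781/16)*(m+3) + (177/2)*(m+3)*(m+2) - (13/2)*(m+3)*(m+2)*(m+1))
        + (-6 + (199/8)*(m+3) + (177/4)*(m+3)*(m+2) - (83/2)*(m+3)*(m+2)*(m+1))"

lemma osc_mult_fact: "odd n \<Longrightarrow> osc L n * fact n =
   sum_list (map (\<lambda>(j,k,a). if j \<le> n then a * k^(n-j) * (fact n / fact (n-j)) else 0) L)"
  unfolding osc_def by (induction L) (auto simp: algebra_simps)

lemma osc_LE3_shift: "even m \<Longrightarrow> osc LE3 (m+3) * fact (m+3) = QE3 m"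
proof -
  assume "even m"
  have a1: "fact (m+3) = (real m+3) * (fact (m+2)::real)"
    using fact_Suc[of "m+2", where 'a=real] by (simp add: numeral_3_eq_3 add_ac)
  have a2: "fact (m+2) = (real m+2) * (fact (m+1)::real)"
    using fact_Suc[of "m+1", where 'a=real] by (simp add: numeral_2_eq_2 add_ac)
  have a3: "fact (m+1) = (real m+1) * (fact m::real)"
    using fact_Suc[of "m", where 'a=real] by (simp add: add_ac)
  have fp: "\<And>k. fact k \<noteq> (0::real)" by simp
  have b1: "fact (m+3) = (real m+3) * fact (m+2)" using a1 by simp
  have b2: "fact (m+3) = ((real m+3)*(real m+2)) * fact (m+1)" using a1 a2 by (simp only: mult.assoc)
  have b3: "fact (m+3) = ((real m+3)*(real m+2)*(real m+1)) * fact m" using a1 a2 a3 by (simp only: mult.assoc)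
  have r1: "fact (m+3) / fact (m+2) = (real m+3::real)"
    by (subst b1, rule nonzero_mult_div_cancel_right[OF fp])
  have r2: "fact (m+3) / fact (m+1) = (real m+3)*(real m+2::real)"
    by (subst b2, rule nonzero_mult_div_cancel_right[OF fp])
  have r3: "fact (m+3) / fact m = (real m+3)*(real m+2)*(real m+1::real)"
    by (subst b3, rule nonzero_mult_div_cancel_right[OF fp])
  have e: "m + 3 - 1 = m + 2" "m + 3 - 2 = m + 1" "m + 3 - 3 = m" "m + 3 - 0 = m+3" by auto
  have r0: "fact (m+3) / fact (m+3) = (1::real)" using fp by simp
  have c: "(0::nat) \<le> m+3" "(1::nat) \<le> m+3" "(2::nat) \<le> m+3" "(3::nat) \<le> m+3" by auto
  have "odd (m+3)" using \<open>even m\<close> by simp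
  then have "osc LE3 (m+3) * fact (m+3) = sum_list (map (\<lambda>(j,k,a). if j \<le> m+3 then a * k^(m+3-j) * (fact (m+3) / fact (m+3-j)) else 0) LE3)"
    by (rule osc_mult_fact)
  also have "\<dots> = QE3 m"
    unfolding LE3_def 
    apply (simp only: list.map prod.case sum_list_simps c if_True e r0 r1 r2 r3)
    apply (simp add: QE3_def power_add field_simps)
    done
  finally show ?thesis .
qed

lemma pow53: "m \<ge> 17 \<Longrightarrow> 49 * (real m + 3) * 3^m \<le> 3 * (5::real)^m"
proof (induction m rule: dec_induct)
  case base
  show ?case by simp
next
  case (step m)
  have "49 * (real (Suc m) + 3) * 3^(Suc m) = 3 * (49 * (real m + 3) * 3^m) + 147 * 3^m" by (simp add: algebra_simps)
  also have "\<dots> \<le> 5 * (49 * (real m + 3) * 3^m)" by (simp add: algebra_simps)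
  also have "\<dots> \<le> 5 * (3 * 5^m)" by (rule mult_left_mono[OF step.IH]) simp
  finally show ?case by (simp add: algebra_simps)
qed

lemma QE3_nonneg: "m \<ge> 17 \<Longrightarrow> QE3 m \<ge> 0"
proof -
  assume m: "m \<ge> 17"
  define n where "n = real m + 3"
  have n20: "n \<ge> 20" using m by (simp add: n_def)
  define t where "t = (5::real)^m"
  define u where "u = (3::real)^m"
  have u1: "u \<ge> 1" by (simp add: u_def)
  have tu: "49 * n * u \<le> 3 * t" using pow53[OF m] by (simp add: n_def t_def u_def)
  have Q: "QE3 m = t * (375 - (2225/16)*n + (45/4)*n*(n-1))
        + u * (-81 - (2781/16)*n + (177/2)*n*(n-1) - (13/2)*n*(n-1)*(n-2))
        + (-6 + (199/8)*n + (177/4)*n*(n-1) - (83/2)*n*(n-1)*(n-2))"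
    by (simp add: QE3_def n_def t_def u_def algebra_simps)
  have nn: "n*n \<ge> 20*n" using n20 by (simp add: mult_right_mono)
  have nnn: "n*n*n \<ge> 20*n*n" using n20 by (simp add: mult_right_mono)
  have A: "375 - (2225/16)*n + (45/4)*n*(n-1) \<ge> 3*n^2"
  proof -
    have "375 - (2225/16)*n + (45/4)*n*(n-1) - 3*n^2 = (33/4)*(n*n) - (2405/16)*n + 375"
      by (simp add: field_simps power2_eq_square)
    also have "\<dots> \<ge> 0" using nn n20 by linarith
    finally show ?thesis by simp
  qed
  have B: "-81 - (2781/16)*n + (177/2)*n*(n-1) - (13/2)*n*(n-1)*(n-2) \<ge> -7*n^3"
  proof -
    have "-81 - (2781/16)*n + (177/2)*n*(n-1) - (13/2)*n*(n-1)*(n-2) + 7*n^3 = (1/2)*(n*n*n) + 108*(n*n) - (4405/16)*n - 81"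
      by (simp add: field_simps power3_eq_cube)
    also have "\<dots> \<ge> 0" using nn nnn n20 by linarith
    finally show ?thesis by simp
  qed
  have C: "-6 + (199/8)*n + (177/4)*n*(n-1) - (83/2)*n*(n-1)*(n-2) \<ge> -42*n^3"
  proof -
    have "-6 + (199/8)*n + (177/4)*n*(n-1) - (83/2)*n*(n-1)*(n-2) + 42*n^3 = (1/2)*(n*n*n) + (675/4)*(n*n) - (819/8)*n - 6"
      by (simp add: field_simps power3_eq_cube)
    also have "\<dots> \<ge> 0" using nn nnn n20 by linarith
    finally show ?thesis by simp
  qed
  have t0: "t \<ge> 0" by (simp add: t_def)
  have "QE3 m \<ge> t * (3*n^2) + u * (-7*n^3) + (-42*n^3)"
    unfolding Q using A B C t0 u1 by (intro add_mono mult_left_mono) auto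
  also have "t * (3*n^2) + u * (-7*n^3) + (-42*n^3) = n^2 * (3*t - 7*n*u - 42*n)"
    by (simp add: algebra_simps power2_eq_square power3_eq_cube)
  also have "\<dots> \<ge> 0"
  proof -
    have "42*n \<le> 42*n*u" using u1 n20 by simp
    then have "3*t - 7*n*u - 42*n \<ge> 0" using tu by simp
    then show ?thesis by simp
  qed
  finally show ?thesis .
qed

lemma QE3_nonneg_all: "even m \<Longrightarrow> QE3 m \<ge> 0"
proof (cases "m < 17")
  case True
  assume "even m"
  have "list_all (\<lambda>m. even m \<longrightarrow> QE3 m \<ge> 0) [0..<17]"
    by (simp add: upt_rec QE3_def)
  then show ?thesis using True \<open>even m\<close> by (simp add: list_all_iff)
next
  case False
  then show ?thesis using QE3_nonneg by simp
qed

lemma osc_LE3_nonneg: "osc LE3 n \<ge> 0"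
proof (cases "n < 3")
  case True
  then have "n = 0 \<or> n = 1 \<or> n = 2" by auto
  then show ?thesis by (auto simp: osc_def LE3_def)
next
  case False
  then obtain m where nm: "n = m + 3" by (metis add.commute le_Suc_ex not_less)
  show ?thesis
  proof (cases "even m")
    case True
    have "osc LE3 n * fact n \<ge> 0" using osc_LE3_shift[OF True] QE3_nonneg_all[OF True] nm by simp
    then show ?thesis using fact_gt_zero[of n, where 'a=real] by (auto simp: zero_le_mult_iff)
  next
    case False
    then show ?thesis by (simp add: osc_def nm)
  qed
qed

lemma osc_LE3_pos: "osc LE3 11 > 0"
  by (simp add: osc_def LE3_def fact_numeral)

lemma E3_pos: "x > 0 \<Longrightarrow> E3 x > 0"
  unfolding E3_osf by (rule osf_pos[OF _ osc_LE3_nonneg osc_LE3_pos])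


lemma osc_mult_fact': "odd n \<Longrightarrow> osc L n * fact n =
   sum_list (map (\<lambda>(j,k,a). if j \<le> n then a * k^(n-j) * (fact n / fact (n-j)) else 0) L)"
  unfolding osc_def by (induction L) (auto simp: algebra_simps)

lemma g_pos: "x > 0 \<Longrightarrow> x * cosh x - sinh x > (0::real)"
proof -
  assume x: "x > 0"
  have eq: "x * cosh x - sinh x = osf [(1,1,1),(0,1,-1)] x" by (simp add: osf_def)
  have nn: "osc [(1,1,1),(0,1,-1)] n \<ge> 0" for n
  proof (cases n)
    case 0 then show ?thesis by (simp add: osc_def)
  next
    case (Suc m)
    have "1 / fact (Suc m) \<le> (1::real) / fact m"
      by (intro divide_left_mono) (auto simp: fact_mono)
    then show ?thesis by (simp add: osc_def Suc)
  qed
  have p: "osc [(1,1,1),(0,1,-1)] 3 > 0" by (simp add: osc_def fact_numeral)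
  show ?thesis unfolding eq by (rule osf_pos[OF x nn p])
qed

lemma q_pos: "x > 0 \<Longrightarrow> cosh x * sinh x - x > (0::real)"
proof -
  assume x: "x > 0"
  have eq: "cosh x * sinh x - x = osf [(0,2,1/2),(1,0,-1)] x"
    using sinh_double[of x] by (simp add: osf_def)
  have nn: "osc [(0,2,1/2),(1,0,-1)] n \<ge> 0" for n
  proof (cases n)
    case 0 then show ?thesis by (simp add: osc_def)
  next
    case (Suc m)
    then show ?thesis by (cases m) (auto simp: osc_def)
  qed
  have p: "osc [(0,2,1/2),(1,0,-1)] 3 > 0" by (simp add: osc_def fact_numeral)
  show ?thesis unfolding eq by (rule osf_pos[OF x nn p])
qed

definition Af :: "real \<Rightarrow> real" where
  "Af x = 4*x + 3*x*sinh x^2 - 4*cosh x*sinh x"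

lemma A_pos: "x > 0 \<Longrightarrow> Af x > 0"
proof -
  assume x: "x > 0"
  let ?L = "[(1,0,5/2),(1,2,3/2),(0,2,-2)] :: (nat \<times> real \<times> real) list"
  have eq: "Af x = osf ?L x"
    unfolding Af_def osf_def using sinh_double[of x] cosh_double[of x] cosh_square_eq[of x]
    by (simp add: field_simps)
  have nn: "osc ?L n \<ge> 0" for n
  proof (cases "odd n \<and> n \<ge> 2")
    case False
    then have "even n \<or> n = 1 \<or> n = 0" by auto
    then show ?thesis by (auto simp: osc_def)
  next
    case True
    obtain m where nm1: "n = m + 1" using True by (cases n) auto
    have "m \<ge> 2" using True nm1 by presburger
    note nm = nm1 this
    have fp: "\<And>k. fact k \<noteq> (0::real)" by simp
    have r1: "fact (m+1) / fact m = (real m + 1::real)"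
      using fact_Suc[of m, where 'a=real] fp[of m] by (simp add: field_simps)
    have r0: "fact (m+1) / fact (m+1) = (1::real)" using fp by simp
    have c: "(0::nat) \<le> m+1" "(1::nat) \<le> m+1" by auto
    have e: "m + 1 - 1 = m" "m + 1 - 0 = m + 1" by auto
    have z: "(0::real)^m = 0" using nm by simp
    have "osc ?L n * fact n = sum_list (map (\<lambda>(j,k,a). if j \<le> n then a * k^(n-j) * (fact n / fact (n-j)) else 0) ?L)"
      using True by (intro osc_mult_fact') auto
    also have "\<dots> = (3/2) * 2^m * (real m + 1) - 2 * 2^(m+1)"
      unfolding nm(1)
      by (simp only: list.map prod.case sum_list_simps c if_True e r0 r1 z)
    also have "\<dots> = 2^m * ((3/2) * real m - 5/2)" by (simp add: algebra_simps)
    also have "\<dots> \<ge> 0" using nm by simp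
    finally show ?thesis using fact_gt_zero[of n, where 'a=real] by (auto simp: zero_le_mult_iff)
  qed
  have p: "osc ?L 3 > 0" by (simp add: osc_def fact_numeral)
  show ?thesis unfolding eq by (rule osf_pos[OF x nn p])
qed


lemma laz_pow: "m \<ge> 4 \<Longrightarrow> 4 * (real m + 3)^3 + 3 \<le> 27 * (3::real)^m"
proof (induction m rule: dec_induct)
  case base
  show ?case by simp
next
  case (step m)
  have "4 * (real (Suc m) + 3)^3 + 3 \<le> 3 * (4 * (real m + 3)^3 + 3)"
    by (simp add: algebra_simps power3_eq_cube)
  also have "\<dots> \<le> 3 * (27 * 3^m)" by (rule mult_left_mono[OF step.IH]) simp
  finally show ?case by (simp add: algebra_simps)
qed

lemma lazarevic: "(x::real) > 0 \<Longrightarrow> x^3 * cosh x < sinh x ^ 3"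
proof -
  assume x: "x > 0"
  let ?L = "[(0,3,1/4),(0,1,-3/4),(3,1,-1)] :: (nat \<times> real \<times> real) list"
  have eq: "sinh x ^ 3 - x^3 * cosh x = osf ?L x"
    unfolding osf_def using sinh3[of x] by (simp add: field_simps)
  have nn: "osc ?L n \<ge> 0" for n
  proof (cases "odd n \<and> n \<ge> 3")
    case False
    then have "even n \<or> n = 1" by presburger
    then show ?thesis by (auto simp: osc_def)
  next
    case True
    obtain m where nm1: "n = m + 3" using True by (metis add.commute le_Suc_ex)
    have em: "even m" using True nm1 by presburger
    have fp: "\<And>k. fact k \<noteq> (0::real)" by simp
    have a1: "fact (m+3) = (real m+3) * (fact (m+2)::real)"
      using fact_Suc[of "m+2", where 'a=real] by (simp add: numeral_3_eq_3 add_ac)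
    have a2: "fact (m+2) = (real m+2) * (fact (m+1)::real)"
      using fact_Suc[of "m+1", where 'a=real] by (simp add: numeral_2_eq_2 add_ac)
    have a3: "fact (m+1) = (real m+1) * (fact m::real)"
      using fact_Suc[of "m", where 'a=real] by (simp add: add_ac)
    have b3: "fact (m+3) = ((real m+3)*(real m+2)*(real m+1)) * fact m" using a1 a2 a3 by (simp only: mult.assoc)
    have r3: "fact (m+3) / fact m = (real m+3)*(real m+2)*(real m+1::real)"
      by (subst b3, rule nonzero_mult_div_cancel_right[OF fp])
    have r0: "fact (m+3) / fact (m+3) = (1::real)" using fp by simp
    have c: "(0::nat) \<le> m+3" "(3::nat) \<le> m+3" by auto
    have e: "m + 3 - 3 = m" "m + 3 - 0 = m + 3" by auto
    have "osc ?L n * fact n = sum_list (map (\<lambda>(j,k,a). if j \<le> n then a * k^(n-j) * (fact n / fact (n-j)) else 0) ?L)"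
      using True by (intro osc_mult_fact') auto
    also have "\<dots> = (1/4) * 3^(m+3) - 3/4 - (real m+3)*(real m+2)*(real m+1)"
      unfolding nm1
      by (simp only: list.map prod.case sum_list_simps c if_True e r0 r3) simp
    also have "\<dots> \<ge> 0"
    proof (cases "m \<ge> 4")
      case True
      have "(real m+3)*(real m+2)*(real m+1) \<le> (real m + 3)^3"
        by (simp add: power3_eq_cube mult_mono)
      then show ?thesis using laz_pow[OF True] by (simp add: power_add)
    next
      case False
      then have "m = 0 \<or> m = 2" using em by presburger
      then show ?thesis by auto
    qed
    finally show ?thesis using fact_gt_zero[of n, where 'a=real] by (auto simp: zero_le_mult_iff)
  qed
  have p: "osc ?L 7 > 0" by (simp add: osc_def fact_numeral)
  show ?thesis using osf_pos[OF x nn p] eq by simp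
qed


definition G :: "real \<Rightarrow> real" where
  "G x = (36/5) * ln (sinh x / x) - ln (2 * Af x) + ln (cosh x * sinh x - x)"

definition DG :: "real \<Rightarrow> real" where
  "DG x = (36/5)*((x*cosh x - sinh x)/(x*sinh x)) - (6*x*sinh x*cosh x - 5*sinh x^2)/Af x
          + 2*sinh x^2/(cosh x*sinh x - x)"

lemma Af_deriv: "(Af has_real_derivative (6*x*sinh x*cosh x - 5*sinh x^2)) (at x)"
  unfolding Af_def[abs_def]
  apply (rule derivative_eq_intros refl)+
  using cosh_square_eq[of x] by (simp add: algebra_simps power2_eq_square)

lemma Q_deriv: "((\<lambda>x. cosh x * sinh x - x) has_real_derivative (2*sinh x^2)) (at x)"
  apply (rule derivative_eq_intros refl)+
  using cosh_square_eq[of x] by (simp add: algebra_simps power2_eq_square)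

lemma G_deriv: "x > 0 \<Longrightarrow> (G has_real_derivative DG x) (at x)"
proof -
  assume x: "x > 0"
  have s: "sinh x > 0" using x by simp
  have a: "Af x > 0" using A_pos[OF x] .
  have q: "cosh x * sinh x - x > 0" using q_pos[OF x] .
  have sx: "0 < sinh x / x" using s x by simp
  have a2: "0 < 2 * Af x" using a by simp
  have x0: "x \<noteq> 0" using x by simp
  show ?thesis
    unfolding G_def[abs_def]
    apply (rule Af_deriv Q_deriv derivative_eq_intros refl | rule sx a2 q x0)+
    using x0 s a q
    apply (simp add: DG_def field_simps)
    done
qed

lemma DG_alg:
  fixes x S C A Q :: real
  assumes "x\<noteq>0" "S\<noteq>0" "A\<noteq>0" "Q\<noteq>0" "A = 4*x+3*x*S^2-4*C*S" "Q = C*S - x" "C^2 = 1+S^2"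
  shows "((36/5)*((x*C - S)/(x*S)) - (6*x*S*C - 5*S^2)/A + 2*S^2/Q) * (5*x*S*A*Q)
       = 3*(12*(x*C - S)*A*Q + 5*x*S^2*(2*x^2*C - x*S - C*S^2))"
proof -
  have "((36/5)*((x*C - S)/(x*S)) - (6*x*S*C - 5*S^2)/A + 2*S^2/Q) * (5*x*S*A*Q)
       = 36*(x*C - S)*A*Q - 5*x*S*(6*x*S*C - 5*S^2)*Q + 10*x*S^3*A"
    using assms(1-4) by (simp add: field_simps power2_eq_square power3_eq_cube)
  also have "\<dots> = 3*(12*(x*C - S)*A*Q + 5*x*S^2*(2*x^2*C - x*S - C*S^2))"
    using assms(5-7) by algebra
  finally show ?thesis .
qed

lemma DG_pos: "x > 0 \<Longrightarrow> DG x > 0"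
proof -
  assume x: "x > 0"
  have s: "sinh x > 0" using x by simp
  have a: "Af x > 0" using A_pos[OF x] .
  have q: "cosh x * sinh x - x > 0" using q_pos[OF x] .
  have e: "E3 x > 0" using E3_pos[OF x] .
  have E3': "E3 x = 12*(x*cosh x - sinh x)*Af x*(cosh x*sinh x - x) + 5*x*sinh x^2*(2*x^2*cosh x - x*sinh x - cosh x*sinh x^2)"
    by (simp add: E3_def Af_def)
  have eq: "DG x * (5*x*sinh x*Af x*(cosh x * sinh x - x)) = 3 * E3 x"
    unfolding DG_def E3'
    by (rule DG_alg) (use x s a q cosh_square_eq[of x] in \<open>auto simp: Af_def\<close>)
  have P: "5*x*sinh x*Af x*(cosh x * sinh x - x) > 0" using x s a q by simp
  have "DG x * (5*x*sinh x*Af x*(cosh x * sinh x - x)) > 0" unfolding eq using e by simp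
  then show ?thesis using P zero_less_mult_pos2 by blast
qed

lemma pos_from_deriv:
  fixes f f' :: "real \<Rightarrow> real"
  assumes d: "\<And>x. x > 0 \<Longrightarrow> (f has_real_derivative f' x) (at x)"
    and p: "\<And>x. x > 0 \<Longrightarrow> f' x > 0"
    and l: "(f \<longlongrightarrow> 0) (at_right 0)"
    and x: "x > 0"
  shows "f x > 0"
proof -
  have mono: "f a < f b" if "0 < a" "a < b" for a b
  proof (rule DERIV_pos_imp_increasing[OF that(2)])
    fix t assume "a \<le> t" "t \<le> b"
    then have "t > 0" using that by simp
    then show "\<exists>y. (f has_real_derivative y) (at t) \<and> 0 < y" using d p by blast
  qed
  have ev: "\<forall>\<^sub>F y in at_right 0. f y \<le> f (x/2)"
  proof -
    have "\<forall>\<^sub>F y in at_right 0. y \<in> {0<..<x/2}" using x by (intro eventually_at_right_real) simp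
    then show ?thesis by (rule eventually_mono) (auto intro!: less_imp_le[OF mono])
  qed
  have "0 \<le> f (x/2)"
    by (rule tendsto_upperbound[OF l ev]) simp
  also have "f (x/2) < f x" using x by (intro mono) auto
  finally show ?thesis .
qed

lemma G_lim0: "((\<lambda>x. (36/5) * ln (sinh x / x) - ln (2 * Af x) + ln (cosh x * sinh x - x)) \<longlongrightarrow> 0) (at_right 0)"
  unfolding Af_def by real_asymp

lemma G_lim: "(G \<longlongrightarrow> 0) (at_right 0)"
  using G_lim0 unfolding G_def[abs_def] .

lemma G_pos: "x > 0 \<Longrightarrow> G x > 0"
  by (rule pos_from_deriv[of G DG, OF G_deriv DG_pos G_lim])


lemma H_lim0: "((\<lambda>x::real. (12/5)*ln(cosh x) + ln(2 + exp((36/5)*ln(sinh x/x))) - ln 3 - (48/5)*ln(sinh x/x)) \<longlongrightarrow> 0) (at_right 0)"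
  by real_asymp


definition H :: "real \<Rightarrow> real" where
  "H x = (12/5)*ln(cosh x) + ln(2 + exp((36/5)*ln(sinh x/x))) - ln 3 - (48/5)*ln(sinh x/x)"

definition DH :: "real \<Rightarrow> real" where
  "DH x = (12/5)*(sinh x/cosh x)
     + exp((36/5)*ln(sinh x/x)) * ((36/5)*((x*cosh x - sinh x)/(x*sinh x))) / (2 + exp((36/5)*ln(sinh x/x)))
     - (48/5)*((x*cosh x - sinh x)/(x*sinh x))"

lemma HD_eq: "0 * a + 1/C*(S*1)*(12/5) + 1/(2+E)*(0 + E*(0*b + K*(36/5))) - 0 - (0*b + K*(48/5))
   = (12/5)*(S/C) + E*((36/5)*K)/(2+E) - (48/5)*(K::real)"
proof -
  have a1: "1/C*(S*1)*(12/5) = (12/5)*(S/C)" by simp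
  have a2: "1/(2+E)*(0 + E*(0*b + K*(36/5))) = E*((36/5)*K)/(2+E)" by (simp add: ac_simps)
  have a3: "(0*b + K*(48/5)) = (48/5)*K" by simp
  show ?thesis unfolding a1 a2 a3 by simp
qed

lemma H_deriv: "x > 0 \<Longrightarrow> (H has_real_derivative DH x) (at x)"
proof -
  assume x: "x > 0"
  have s: "sinh x > 0" using x by simp
  have sx: "0 < sinh x / x" using s x by simp
  have c: "0 < cosh x" by (simp add: cosh_real_pos)
  have y: "0 < 2 + exp((36/5)*ln(sinh x/x))" by (simp add: add_pos_pos)
  have x0: "x \<noteq> 0" using x by simp
  have k: "1/(sinh x/x) * ((cosh x*1*x - sinh x*1)/(x*x)) = (x*cosh x - sinh x)/(x*sinh x)"
    using x0 s by (simp add: field_simps)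
  show ?thesis
    unfolding H_def[abs_def]
    apply (rule derivative_eq_intros refl | rule sx c y x0)+
    apply (simp only: k)
    unfolding DH_def
    apply (rule HD_eq)
    done
qed

lemma DH_alg:
  fixes x S C Y A Q :: real
  assumes "x\<noteq>0" "S\<noteq>0" "C\<noteq>0" "2+Y\<noteq>0" "A = 4*x+3*x*S^2-4*C*S" "Q = C*S - x" "C^2 = 1+S^2"
  shows "((12/5)*(S/C) + Y * ((36/5)*((x*C - S)/(x*S))) / (2 + Y) - (48/5)*((x*C - S)/(x*S)))
          * (5*x*S*C*(2+Y)) = 12*(Y*Q - 2*A)"
proof -
  define W where "W = 2 + Y"
  have W: "W \<noteq> 0" using assms(4) by (simp add: W_def)
  have t1: "(12/5)*(S/C) * (5*x*S*C*W) = 12*x*S^2*W" using assms(3) by (simp add: field_simps power2_eq_square)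
  have t2: "Y * ((36/5)*((x*C - S)/(x*S))) / W * (5*x*S*C*W) = 36*Y*C*(x*C-S)"
    using assms(1,2) W by (simp add: field_simps)
  have t3: "(48/5)*((x*C - S)/(x*S)) * (5*x*S*C*W) = 48*C*(x*C-S)*W"
    using assms(1,2) by (simp add: field_simps)
  have "((12/5)*(S/C) + Y * ((36/5)*((x*C - S)/(x*S))) / (2 + Y) - (48/5)*((x*C - S)/(x*S)))
          * (5*x*S*C*(2+Y)) = 12*x*S^2*(2+Y) + 36*Y*C*(x*C-S) - 48*C*(x*C-S)*(2+Y)"
    unfolding W_def[symmetric] by (simp only: left_diff_distrib distrib_right t1 t2 t3)
  also have "\<dots> = 12*(Y*Q - 2*A)"
    using assms(5-7) by algebra
  finally show ?thesis .
qed

lemma DH_pos: "x > 0 \<Longrightarrow> DH x > 0"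
proof -
  assume x: "x > 0"
  have s: "sinh x > 0" using x by simp
  have c: "0 < cosh x" by (simp add: cosh_real_pos)
  have a: "Af x > 0" using A_pos[OF x] .
  have q: "cosh x * sinh x - x > 0" using q_pos[OF x] .
  define Y where "Y = exp((36/5)*ln(sinh x/x))"
  have Y0: "Y > 0" by (simp add: Y_def)
  have "G x > 0" by (rule G_pos[OF x])
  then have "ln (2 * Af x) - ln (cosh x * sinh x - x) < (36/5) * ln (sinh x / x)"
    by (simp add: G_def)
  then have "ln (2 * Af x / (cosh x * sinh x - x)) < (36/5) * ln (sinh x / x)"
    using a q by (simp add: ln_div)
  then have "exp (ln (2 * Af x / (cosh x * sinh x - x))) < Y"
    unfolding Y_def by simp
  then have "2 * Af x / (cosh x * sinh x - x) < Y" using a q by simp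
  then have YQ: "2 * Af x < Y * (cosh x * sinh x - x)" using q by (simp add: field_simps)
  have eq: "DH x * (5*x*sinh x*cosh x*(2+Y)) = 12*(Y*(cosh x * sinh x - x) - 2*Af x)"
    unfolding DH_def Y_def[symmetric]
  proof (rule DH_alg)
    show "x \<noteq> 0" using x by simp
    show "sinh x \<noteq> 0" using s by simp
    show "cosh x \<noteq> 0" using c by simp
    show "2 + Y \<noteq> 0" using Y0 by simp
    show "Af x = 4*x+3*x*sinh x^2-4*cosh x*sinh x" by (simp add: Af_def)
    show "cosh x * sinh x - x = cosh x * sinh x - x" ..
    show "cosh x ^ 2 = 1 + sinh x ^ 2" using cosh_square_eq[of x] by simp
  qed
  have P: "5*x*sinh x*cosh x*(2+Y) > 0" using x s c Y0 by simp
  have "12*(Y*(cosh x * sinh x - x) - 2*Af x) > 0" using YQ by (simp add: algebra_simps)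
  then have "DH x * (5*x*sinh x*cosh x*(2+Y)) > 0" unfolding eq .
  then show ?thesis using P by (rule zero_less_mult_pos2)
qed

lemma H_lim: "(H \<longlongrightarrow> 0) (at_right 0)"
  using H_lim0 unfolding H_def[abs_def] .

lemma H_pos: "x > 0 \<Longrightarrow> H x > 0"
  by (rule pos_from_deriv[of H DH, OF H_deriv DH_pos H_lim])


lemma nec_lim: "((\<lambda>x::real. (2/3 * (x / sinh x) powr (3 * p) + 1/3 - (tanh x / x) powr p) / x^4)
   \<longlongrightarrow> (p * (3 * p - 1) / 12 + 7 * p / 60) / 3 - ((p - 1) * p / 18 + 2 * p / 15)) (at_right 0)"
  by real_asymp


lemma ineq125:
  fixes x :: real
  assumes x: "x > 0"
  shows "(tanh x / x) powr (12/5) < 2/3 * (x / sinh x) powr (3 * (12/5)) + 1/3"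
proof -
  have S: "sinh x > 0" using x by simp
  have c: "cosh x > 0" by (simp add: cosh_real_pos)
  have s: "sinh x / x > 0" using S x by simp
  define L where "L = ln (sinh x / x)"
  define M where "M = ln (cosh x)"
  define Y where "Y = exp ((36/5) * L)"
  have Y0: "Y > 0" by (simp add: Y_def)
  have h: "ln 3 + (48/5) * L - (12/5) * M < ln (2 + Y)"
    using H_pos[OF x] by (simp add: H_def L_def M_def Y_def)
  have "ln 3 + (48/5) * L - (12/5) * M = ln 3 + ((36/5) * L + (12/5) * (L - M))"
    by (simp add: field_simps)
  then have "exp (ln 3 + (48/5) * L - (12/5) * M) = exp (ln 3) * (exp ((36/5) * L) * exp ((12/5) * (L - M)))"
    by (simp only: exp_add)
  then have "3 * (Y * exp ((12/5) * (L - M))) = exp (ln 3 + (48/5) * L - (12/5) * M)"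
    by (simp add: Y_def)
  also have "\<dots> < exp (ln (2 + Y))" using h by simp
  also have "\<dots> = 2 + Y" using Y0 by simp
  finally have k: "3 * (Y * exp ((12/5) * (L - M))) < 2 + Y" .
  have t: "tanh x / x = (sinh x / x) / cosh x" by (simp add: tanh_def)
  have lhs: "(tanh x / x) powr (12/5) = exp ((12/5) * (L - M))"
  proof -
    have "ln ((sinh x / x) / cosh x) = L - M" unfolding L_def M_def using s c by (rule ln_divide_pos)
    moreover have "(sinh x / x) / cosh x \<noteq> 0" using s c x by simp
    ultimately show ?thesis unfolding t powr_def by (simp add: mult.commute)
  qed
  have rhs: "(x / sinh x) powr (3 * (12/5)) = inverse Y"
  proof -
    have l1: "ln (x / sinh x) = - L" using x S by (simp add: L_def ln_divide_pos)
    have nz: "x / sinh x \<noteq> 0" using x S by simp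
    have "(x / sinh x) powr (3 * (12/5)) = exp (- ((36/5) * L))"
      unfolding powr_def using nz l1 by simp
    also have "\<dots> = inverse Y" by (simp add: Y_def exp_minus)
    finally show ?thesis .
  qed
  have "exp ((12/5) * (L - M)) < (2 + Y) / (3 * Y)"
    using k Y0 by (simp add: field_simps)
  also have "(2 + Y) / (3 * Y) = 2/3 * inverse Y + 1/3" using Y0 by (simp add: field_simps)
  finally show ?thesis unfolding lhs rhs .
qed

lemma conv_step:
  fixes t B :: real
  assumes t: "t \<ge> 1" and B: "B > 0"
  shows "(2/3 * B + 1/3) powr t \<le> 2/3 * B powr t + 1/3"
proof -
  have "(\<lambda>x. x powr t) ((1 - 1/3) *\<^sub>R B + (1/3) *\<^sub>R 1) \<le> (1 - 1/3) * B powr t + (1/3) * 1 powr t"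
    by (rule convex_onD[OF powr_convex[OF t]]) (use B in auto)
  then show ?thesis by simp
qed

lemma big_p:
  fixes p x :: real
  assumes p: "p \<ge> 12/5" and x: "x > 0"
  shows "(tanh x / x) powr p < 2/3 * (x / sinh x) powr (3 * p) + 1/3"
proof -
  have S: "sinh x > 0" using x by simp
  have c: "cosh x > 0" by (simp add: cosh_real_pos)
  have a: "tanh x / x > 0" using S c x by (simp add: tanh_def)
  have b: "x / sinh x > 0" using S x by simp
  define t where "t = p * (5/12)"
  have t1: "t \<ge> 1" using p by (simp add: t_def)
  define A0 where "A0 = (tanh x / x) powr (12/5)"
  define B0 where "B0 = (x / sinh x) powr (3 * (12/5))"
  have B0: "B0 > 0" using b x by (simp add: B0_def)
  have A0: "A0 \<ge> 0" by (simp add: A0_def)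
  have "(tanh x / x) powr p = A0 powr t" by (simp add: A0_def t_def powr_powr)
  also have "\<dots> < (2/3 * B0 + 1/3) powr t"
    using ineq125[OF x] t1 A0 by (intro powr_less_mono2) (auto simp: A0_def B0_def)
  also have "\<dots> \<le> 2/3 * B0 powr t + 1/3" by (rule conv_step[OF t1 B0])
  also have "B0 powr t = (x / sinh x) powr (3 * p)" by (simp add: B0_def t_def powr_powr)
  finally show ?thesis .
qed

lemma neg_p:
  fixes p x :: real
  assumes p: "p < 0" and x: "x > 0"
  shows "(tanh x / x) powr p < 2/3 * (x / sinh x) powr (3 * p) + 1/3"
proof -
  have S: "sinh x > 0" using x by simp
  have c: "cosh x > 0" by (simp add: cosh_real_pos)
  have b: "x / sinh x > 0" using S x by simp
  have xs: "x < sinh x"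
  proof -
    have "x^3 \<le> x^3 * cosh x" using x cosh_real_ge_1[of x] by simp
    also have "\<dots> < sinh x ^ 3" by (rule lazarevic[OF x])
    finally have "x^3 < sinh x ^ 3" .
    then show ?thesis using power_less_imp_less_base[of x 3 "sinh x"] S by simp
  qed
  have b1: "x / sinh x < 1" using S x xs by simp
  define v where "v = (x / sinh x) powr p"
  have v1: "v > 1"
  proof -
    have "ln (x / sinh x) < 0" using b b1 by simp
    then have "p * ln (x / sinh x) > 0" using p by (simp add: mult_neg_neg)
    then show ?thesis using b x by (simp add: v_def powr_def)
  qed
  have v3: "(x / sinh x) powr (3 * p) = v ^ 3"
  proof -
    have "(x / sinh x) powr (3 * p) = v powr 3" by (simp add: v_def powr_powr mult.commute)
    then show ?thesis using v1 by simp
  qed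
  have le: "(x / sinh x)^2 \<le> tanh x / x"
  proof -
    have "x^3 * cosh x < sinh x ^ 3" by (rule lazarevic[OF x])
    then have "x^2 * (x * cosh x) \<le> sinh x ^ 2 * sinh x" by (simp add: power2_eq_square power3_eq_cube algebra_simps)
    then show ?thesis using S x c by (simp add: tanh_def power2_eq_square field_simps)
  qed
  have "(tanh x / x) powr p \<le> ((x / sinh x)^2) powr p"
    by (rule powr_mono2') (use p b le in auto)
  also have "((x / sinh x)^2) powr p = v ^ 2"
  proof -
    have "((x / sinh x)^2) powr p = ((x / sinh x) powr 2) powr p" using b by simp
    also have "\<dots> = (x / sinh x) powr (p * 2)" by (simp add: powr_powr mult.commute)
    also have "\<dots> = v powr 2" by (simp add: v_def powr_powr)
    also have "\<dots> = v ^ 2" using v1 by simp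
    finally show ?thesis .
  qed
  also have "v ^ 2 < 2/3 * v ^ 3 + 1/3"
  proof -
    have "0 < (v - 1)^2 * (2 * v + 1)" using v1 by simp
    then show ?thesis by (simp add: algebra_simps power2_eq_square power3_eq_cube)
  qed
  finally show ?thesis unfolding v3 .
qed

lemma small_p_fails:
  fixes p :: real
  assumes p: "0 < p" "p < 12/5"
  shows "\<exists>x>0. \<not> ((tanh x / x) powr p < 2/3 * (x / sinh x) powr (3 * p) + 1/3)"
proof -
  let ?l = "(p * (3 * p - 1) / 12 + 7 * p / 60) / 3 - ((p - 1) * p / 18 + 2 * p / 15)"
  have l: "?l = p * (p - 12/5) / 36" by (simp add: field_simps)
  have "?l < 0" unfolding l using p by (simp add: mult_pos_neg)
  then have ev: "\<forall>\<^sub>F x in at_right 0. (2/3 * (x / sinh x) powr (3 * p) + 1/3 - (tanh x / x) powr p) / x^4 < 0"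
    using order_tendstoD(2)[OF nec_lim] by blast
  have ev2: "\<forall>\<^sub>F x in at_right 0. (x::real) > 0" by (simp add: eventually_at_right_less)
  from eventually_happens[OF eventually_conj[OF ev ev2]] obtain x where
    hx: "(2/3 * (x / sinh x) powr (3 * p) + 1/3 - (tanh x / x) powr p) / x^4 < 0" "x > 0"
    by auto
  have "2/3 * (x / sinh x) powr (3 * p) + 1/3 - (tanh x / x) powr p < 0"
    using hx by (simp add: divide_less_0_iff)
  then show ?thesis using hx(2) by auto
qed

theorem proposition4p13:
  fixes p :: real
  assumes "p \<noteq> 0"
  shows "(\<forall>x::real. x > 0 \<longrightarrow>
            (tanh x / x) powr p < 2/3 * (x / sinh x) powr (3 * p) + 1/3)
         \<longleftrightarrow> (p < 0 \<or> p \<ge> 12/5)"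
proof
  assume h: "\<forall>x::real. x > 0 \<longrightarrow> (tanh x / x) powr p < 2/3 * (x / sinh x) powr (3 * p) + 1/3"
  show "p < 0 \<or> p \<ge> 12/5"
  proof (rule ccontr)
    assume "\<not> (p < 0 \<or> p \<ge> 12/5)"
    then have "0 < p" "p < 12/5" using assms by auto
    then show False using small_p_fails h by blast
  qed
next
  assume "p < 0 \<or> p \<ge> 12/5"
  then show "\<forall>x::real. x > 0 \<longrightarrow> (tanh x / x) powr p < 2/3 * (x / sinh x) powr (3 * p) + 1/3"
    using neg_p big_p by blast
qed


end
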